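(* Let $\Omega$ be the set of real symmetric $m\times m$ matrices, $\mathcal{P}$ the set of $m\times m$ orthogonal matrices, and $s(A,B,P)=\|AP-PB\|$ for $A,B\in\Omega$, $P\in\mathcal{P}$, with $\|\cdot\|$ an orthogonally invariant matrix norm. Let $\Lambda_{A_i}\in\mathbb{R}^m$ be the vector of eigenvalues of $A_i$, ordered from largest to smallest. Then $$d_\mathcal{G}(A_{1:n})=\frac12\sum_{i,j\in[n]}\|\Lambda_{A_i}-\Lambda_{A_j}\|,$$ where $d_\mathcal{G}(A_{1:n})=\min_{P\in S}\frac12\sum_{i,j\in[n]}s(A_i,A_j,P_{i,j})$ with $S=\{\{P_{i,j}\}_{i,j\in[n]}: P_{i,j}\in\mathcal{P},\ P_{i,k}P_{k,j}=P_{i,j}\ \forall i,j,k\in[n],\ P_{i,i}=I\ \forall i\in[n]\}$.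
   Context: The vector norm on the right-hand side is the one corresponding to the matrix norm: the Euclidean norm when the matrix norm is the Frobenius norm, and the $\infty$-norm when the matrix norm is the operator 2-norm. *)

theory Defs
  imports "HOL-Analysis.Analysis"
begin

type_synonym 'm mat = "real^'m^'m"

definition symmetric_mat :: "'m::finite mat \<Rightarrow> bool" where
  "symmetric_mat A \<longleftrightarrow> transpose A = A"

text \<open>Eigenvalues with algebraic multiplicity, listed from largest to smallest:
  the unique decreasingly sorted list of length m whose entries are the roots of
  the characteristic polynomial det(xI - A), counted with multiplicity.\<close>
definition eigvals_desc :: "'m::finite mat \<Rightarrow> real list" where
  "eigvals_desc A = (THE xs. length xs = CARD('m) \<and> sorted_wrt (\<ge>) xs \<and>
      (\<forall>x. det (mat x - A) = (\<Prod>i<length xs. x - xs ! i)))"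

text \<open>Matrix norms: Frobenius norm (HOL-Analysis norm on real^'m^'m) and operator 2-norm.\<close>
definition frob_norm :: "'m::finite mat \<Rightarrow> real" where
  "frob_norm M = norm M"

definition op2_norm :: "'m::finite mat \<Rightarrow> real" where
  "op2_norm M = onorm (\<lambda>x. M *v x)"

definition eucl_dist :: "real list \<Rightarrow> real list \<Rightarrow> real" where
  "eucl_dist xs ys = sqrt (\<Sum>k<length xs. (xs ! k - ys ! k)^2)"

definition inf_dist :: "real list \<Rightarrow> real list \<Rightarrow> real" where
  "inf_dist xs ys = (if xs = [] then 0 else Max ((\<lambda>k. \<bar>xs ! k - ys ! k\<bar>) ` {..<length xs}))"

definition sdist :: "('m::finite mat \<Rightarrow> real) \<Rightarrow> 'm mat \<Rightarrow> 'm mat \<Rightarrow> 'm mat \<Rightarrow> real" where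
  "sdist nm A B P = nm (A ** P - P ** B)"

definition sync_set :: "nat \<Rightarrow> (nat \<Rightarrow> nat \<Rightarrow> 'm::finite mat) set" where
  "sync_set n = {P. (\<forall>i<n. \<forall>j<n. orthogonal_matrix (P i j)) \<and>
      (\<forall>i<n. \<forall>j<n. \<forall>k<n. P i k ** P k j = P i j) \<and>
      (\<forall>i<n. P i i = mat 1)}"

definition dG_cost :: "('m::finite mat \<Rightarrow> real) \<Rightarrow> nat \<Rightarrow> (nat \<Rightarrow> 'm mat) \<Rightarrow> (nat \<Rightarrow> nat \<Rightarrow> 'm mat) \<Rightarrow> real" where
  "dG_cost nm n A P = (1/2) * (\<Sum>i<n. \<Sum>j<n. sdist nm (A i) (A j) (P i j))"

definition is_dG :: "('m::finite mat \<Rightarrow> real) \<Rightarrow> nat \<Rightarrow> (nat \<Rightarrow> 'm mat) \<Rightarrow> real \<Rightarrow> bool" where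
  "is_dG nm n A v \<longleftrightarrow> (\<exists>P\<in>sync_set n. dG_cost nm n A P = v) \<and> (\<forall>P\<in>sync_set n. v \<le> dG_cost nm n A P)"

end

theory Submission
  imports Defs "HOL-Computational_Algebra.Polynomial"
begin


definition idx :: "nat \<Rightarrow> 'm::finite" where
  "idx = (SOME h. bij_betw h {..<CARD('m)} (UNIV::'m set))"

lemma idx_bij: "bij_betw (idx::nat \<Rightarrow> 'm::finite) {..<CARD('m)} UNIV"
proof -
  obtain h where "bij_betw h {0..<card (UNIV::'m set)} (UNIV::'m set)"
    using ex_bij_betw_nat_finite[of "UNIV::'m set"] by auto
  then have "\<exists>h. bij_betw h {..<CARD('m)} (UNIV::'m set)" by (auto simp: atLeast0LessThan)
  then show ?thesis unfolding idx_def by (rule someI_ex)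
qed

definition gidx :: "'m::finite \<Rightarrow> nat" where
  "gidx = the_inv_into {..<CARD('m)} idx"

lemma gidx_lt: "gidx (c::'m::finite) < CARD('m)"
  using idx_bij[where 'm='m] unfolding gidx_def
  using the_inv_into_into[of idx "{..<CARD('m)}" c "{..<CARD('m)}"]
  by (auto simp: bij_betw_def)

lemma idx_gidx[simp]: "idx (gidx (c::'m::finite)) = c"
  using idx_bij[where 'm='m] unfolding gidx_def
  using f_the_inv_into_f[of idx "{..<CARD('m)}" c] by (auto simp: bij_betw_def)

lemma gidx_idx[simp]: "k < CARD('m) \<Longrightarrow> gidx (idx k :: 'm::finite) = k"
  using idx_bij[where 'm='m] unfolding gidx_def
  by (simp add: bij_betw_def the_inv_into_f_f)

lemma idx_inj: "k < CARD('m) \<Longrightarrow> l < CARD('m) \<Longrightarrow> (idx k :: 'm::finite) = idx l \<longleftrightarrow> k = l"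
  by (metis gidx_idx)



lemma sym_inner:
  fixes A :: "real^'m^'m"
  assumes "transpose A = A"
  shows "x \<bullet> (A *v y) = (A *v x) \<bullet> y"
proof -
  have "x \<bullet> (A *v y) = (x v* A) \<bullet> y" by (simp add: dot_lmul_matrix)
  also have "x v* A = transpose A *v x"
    by (metis transpose_transpose vector_transpose_matrix)
  finally show ?thesis using assms by simp
qed

lemma mv_scaleR: "(A::real^'n^'m) *v (c *\<^sub>R x) = c *\<^sub>R (A *v x)"
  by (simp add: vec_eq_iff matrix_vector_mult_def sum_distrib_left algebra_simps)

lemma quad_expand:
  fixes A :: "real^'m^'m"
  assumes "transpose A = A"
  shows "(v + t *\<^sub>R y) \<bullet> (A *v (v + t *\<^sub>R y)) =
     v \<bullet> (A *v v) + 2 * t * (y \<bullet> (A *v v)) + t^2 * (y \<bullet> (A *v y))"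
proof -
  have e: "v \<bullet> (A *v y) = y \<bullet> (A *v v)"
    using sym_inner[OF assms, of v y] by (simp add: inner_commute)
  have "A *v (v + t *\<^sub>R y) = A *v v + t *\<^sub>R (A *v y)"
    by (simp add: vec_eq_iff matrix_vector_mult_def sum_distrib_left algebra_simps sum.distrib)
  then show ?thesis
    by (simp add: inner_add_left inner_add_right e power2_eq_square algebra_simps)
qed

lemma eig_max:
  fixes A :: "real^'m^'m"
  assumes sym: "transpose A = A" and S: "subspace S"
    and inv: "\<And>x. x \<in> S \<Longrightarrow> A *v x \<in> S"
    and nz: "x0 \<in> S" "x0 \<noteq> 0"
  shows "\<exists>v lam. v \<in> S \<and> norm v = 1 \<and> A *v v = lam *\<^sub>R v \<and>
            (\<forall>x\<in>S. x \<bullet> (A *v x) \<le> lam * (x \<bullet> x))"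
proof -
  let ?K = "S \<inter> sphere 0 1"
  let ?q = "\<lambda>x. x \<bullet> (A *v x)"
  have cK: "compact ?K"
    using compact_Int_closed[OF compact_sphere closed_subspace[OF S], of 0 1] by (simp add: Int_commute)
  have "x0 /\<^sub>R norm x0 \<in> ?K" using nz S by (simp add: subspace_scale)
  then have neK: "?K \<noteq> {}" by blast
  have cq: "continuous_on ?K ?q"
    by (intro continuous_intros linear_continuous_on matrix_vector_mul_bounded_linear)
  obtain v where v: "v \<in> ?K" and vmax: "\<And>y. y \<in> ?K \<Longrightarrow> ?q y \<le> ?q v"
    using continuous_attains_sup[OF cK neK cq] by blast
  define lam where "lam = ?q v"
  have vS: "v \<in> S" and vn: "norm v = 1" using v by auto
  have vv: "v \<bullet> v = 1" using vn by (simp add: norm_eq_1)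
  have bound: "?q x \<le> lam * (x \<bullet> x)" if xS: "x \<in> S" for x
  proof (cases "x = 0")
    case True then show ?thesis by simp
  next
    case False
    let ?u = "x /\<^sub>R norm x"
    have "?u \<in> ?K" using xS False S by (simp add: subspace_scale)
    then have "?q ?u \<le> lam" using vmax lam_def by blast
    moreover have "?q ?u = ?q x / (norm x)^2"
      by (simp add: mv_scaleR power2_eq_square divide_inverse)
    moreover have "(norm x)^2 = x \<bullet> x" by (simp add: power2_norm_eq_inner)
    moreover have "(norm x)^2 > 0" using False by simp
    ultimately show ?thesis by (simp add: divide_le_eq mult.commute)
  qed
  define y where "y = A *v v - lam *\<^sub>R v"
  have yS: "y \<in> S" unfolding y_def using inv[OF vS] vS S
    by (simp add: subspace_diff subspace_scale)
  have yv: "y \<bullet> v = 0"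
    unfolding y_def lam_def using vv by (simp add: inner_diff_left inner_diff_right inner_commute)
  have yAv: "y \<bullet> (A *v v) = y \<bullet> y"
  proof -
    have "A *v v = y + lam *\<^sub>R v" unfolding y_def by simp
    then show ?thesis using yv by (simp add: inner_add_right)
  qed
  define c where "c = y \<bullet> y"
  define d where "d = lam * c - ?q y"
  have c0: "c \<ge> 0" unfolding c_def by simp
  have d0: "d \<ge> 0" unfolding d_def c_def using bound[OF yS] by simp
  have key: "2 * t * c \<le> t^2 * d" for t
  proof -
    have "v + t *\<^sub>R y \<in> S" using vS yS S by (simp add: subspace_add subspace_scale)
    from bound[OF this] have "?q (v + t *\<^sub>R y) \<le> lam * ((v + t *\<^sub>R y) \<bullet> (v + t *\<^sub>R y))" .
    moreover have "(v + t *\<^sub>R y) \<bullet> (v + t *\<^sub>R y) = 1 + t^2 * c"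
      using vv yv unfolding c_def
      by (simp add: inner_add_left inner_add_right inner_commute power2_eq_square)
    ultimately have "lam + 2 * t * c + t^2 * ?q y \<le> lam * (1 + t^2 * c)"
      using quad_expand[OF sym, of v t y] yAv unfolding lam_def c_def by simp
    then show ?thesis unfolding d_def by (simp add: algebra_simps)
  qed
  have "c = 0"
  proof (rule ccontr)
    assume "c \<noteq> 0"
    then have cp: "c > 0" using c0 by simp
    define t where "t = c / (d + 1)"
    have tp: "t > 0" using cp d0 unfolding t_def by simp
    have "2 * t * c \<le> t^2 * d" by (rule key)
    then have "2 * c \<le> t * d" using tp by (simp add: power2_eq_square mult.assoc)
    moreover have "t * d < c"
      using cp d0 unfolding t_def by (simp add: field_simps)
    ultimately show False using cp by simp
  qed
  then have "y = 0" unfolding c_def by simp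
  then have "A *v v = lam *\<^sub>R v" unfolding y_def by simp
  then show ?thesis using vS vn bound by blast
qed



lemma exists_nonzero_orth:
  fixes v :: "nat \<Rightarrow> real^'m"
  assumes k: "k < CARD('m)" and on: "\<forall>i<k. \<forall>j<k. v i \<bullet> v j = (if i = j then 1 else 0)"
  shows "\<exists>x. x \<noteq> 0 \<and> (\<forall>j<k. v j \<bullet> x = 0)"
proof -
  have "span (v ` {..<k}) \<noteq> UNIV"
  proof
    assume "span (v ` {..<k}) = UNIV"
    then have "dim (UNIV::(real^'m) set) \<le> card (v ` {..<k})"
      by (intro dim_le_card) auto
    also have "\<dots> \<le> k" using card_image_le[of "{..<k}" v] by simp
    finally show False using k by simp
  qed
  then obtain z where z: "z \<notin> span (v ` {..<k})" by blast
  define x where "x = z - (\<Sum>j<k. (v j \<bullet> z) *\<^sub>R v j)"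
  have "v i \<bullet> x = 0" if i: "i < k" for i
  proof -
    have "v i \<bullet> (\<Sum>j<k. (v j \<bullet> z) *\<^sub>R v j) = (\<Sum>j<k. (v j \<bullet> z) * (v i \<bullet> v j))"
      by (simp add: inner_sum_right)
    also have "\<dots> = (\<Sum>j<k. (if j = i then v i \<bullet> z else 0))"
      using on i by (intro sum.cong) auto
    also have "\<dots> = v i \<bullet> z" using i by simp
    finally show ?thesis unfolding x_def by (simp add: inner_diff_right)
  qed
  moreover have "x \<noteq> 0"
  proof
    assume "x = 0"
    then have "z = (\<Sum>j<k. (v j \<bullet> z) *\<^sub>R v j)" unfolding x_def by simp
    also have "\<dots> \<in> span (v ` {..<k})"
      by (intro span_sum span_scale span_base) auto
    finally show False using z by simp
  qed
  ultimately show ?thesis by blast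
qed

lemma greedy:
  fixes A :: "real^'m^'m"
  assumes sym: "transpose A = A"
  shows "k \<le> CARD('m) \<Longrightarrow> \<exists>v lam. (\<forall>i<k. norm (v i) = 1 \<and> A *v v i = lam i *\<^sub>R v i \<and>
      (\<forall>j<i. v j \<bullet> v i = 0) \<and> (\<forall>j<i. lam i \<le> lam j) \<and>
      (\<forall>x. (\<forall>j<i. v j \<bullet> x = 0) \<longrightarrow> x \<bullet> (A *v x) \<le> lam i * (x \<bullet> x)))"
proof (induction k)
  case 0
  then show ?case by auto
next
  case (Suc k)
  then obtain v lam where IH: "\<forall>i<k. norm (v i) = 1 \<and> A *v v i = lam i *\<^sub>R v i \<and>
      (\<forall>j<i. v j \<bullet> v i = 0) \<and> (\<forall>j<i. lam i \<le> lam j) \<and>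
      (\<forall>x. (\<forall>j<i. v j \<bullet> x = 0) \<longrightarrow> x \<bullet> (A *v x) \<le> lam i * (x \<bullet> x))"
    by auto
  define S where "S = {x. \<forall>j<k. v j \<bullet> x = 0}"
  have subS: "subspace S" unfolding S_def subspace_def
    by (simp add: inner_add_right)
  have invS: "A *v x \<in> S" if "x \<in> S" for x
  proof -
    have "v j \<bullet> (A *v x) = 0" if j: "j < k" for j
    proof -
      have "v j \<bullet> (A *v x) = (A *v v j) \<bullet> x" by (rule sym_inner[OF sym])
      also have "\<dots> = lam j * (v j \<bullet> x)" using IH j by simp
      finally show ?thesis using \<open>x \<in> S\<close> j unfolding S_def by simp
    qed
    then show ?thesis unfolding S_def by simp
  qed
  have on: "\<forall>i<k. \<forall>j<k. v i \<bullet> v j = (if i = j then 1 else 0)"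
  proof (intro allI impI)
    fix i j assume "i < k" "j < k"
    show "v i \<bullet> v j = (if i = j then 1 else 0)"
    proof (cases i j rule: linorder_cases)
      case less then show ?thesis using IH \<open>j < k\<close> by auto
    next
      case equal then show ?thesis using IH \<open>j < k\<close> by (simp add: norm_eq_1)
    next
      case greater then show ?thesis using IH \<open>i < k\<close> by (auto simp: inner_commute)
    qed
  qed
  obtain x0 where x0: "x0 \<noteq> 0" "\<forall>j<k. v j \<bullet> x0 = 0"
    using exists_nonzero_orth[OF _ on] Suc.prems by auto
  obtain w l where w: "w \<in> S" "norm w = 1" "A *v w = l *\<^sub>R w"
      "\<forall>x\<in>S. x \<bullet> (A *v x) \<le> l * (x \<bullet> x)"
    using eig_max[OF sym subS invS, of x0] x0 unfolding S_def by auto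
  have lw: "l = w \<bullet> (A *v w)" using w(2,3) by (simp add: norm_eq_1)
  define v' where "v' = v(k := w)"
  define lam' where "lam' = lam(k := l)"
  have "\<forall>i<Suc k. norm (v' i) = 1 \<and> A *v v' i = lam' i *\<^sub>R v' i \<and>
      (\<forall>j<i. v' j \<bullet> v' i = 0) \<and> (\<forall>j<i. lam' i \<le> lam' j) \<and>
      (\<forall>x. (\<forall>j<i. v' j \<bullet> x = 0) \<longrightarrow> x \<bullet> (A *v x) \<le> lam' i * (x \<bullet> x))"
  proof (intro allI impI)
    fix i assume "i < Suc k"
    show "norm (v' i) = 1 \<and> A *v v' i = lam' i *\<^sub>R v' i \<and>
      (\<forall>j<i. v' j \<bullet> v' i = 0) \<and> (\<forall>j<i. lam' i \<le> lam' j) \<and>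
      (\<forall>x. (\<forall>j<i. v' j \<bullet> x = 0) \<longrightarrow> x \<bullet> (A *v x) \<le> lam' i * (x \<bullet> x))"
    proof (cases "i = k")
      case False
      then have "i < k" using \<open>i < Suc k\<close> by simp
      then show ?thesis using IH unfolding v'_def lam'_def by auto
    next
      case True
      have orth: "\<forall>j<k. v j \<bullet> w = 0" using w(1) unfolding S_def by simp
      have le: "l \<le> lam j" if "j < k" for j
      proof -
        have "\<forall>j'<j. v j' \<bullet> w = 0" using orth that by simp
        then have "w \<bullet> (A *v w) \<le> lam j * (w \<bullet> w)" using IH that by blast
        then show ?thesis using lw w(2) by (simp add: norm_eq_1)
      qed
      show ?thesis using True w orth le unfolding v'_def lam'_def S_def by auto
    qed
  qed
  then show ?case by blast
qed



definition dmat :: "('m::finite \<Rightarrow> real) \<Rightarrow> real^'m^'m" where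
  "dmat d = (\<chi> i j. if i = j then d i else 0)"

definition spec :: "real^'m::finite^'m \<Rightarrow> real^'m^'m \<Rightarrow> ('m \<Rightarrow> real) \<Rightarrow> bool" where
  "spec A U d \<longleftrightarrow> orthogonal_matrix U \<and> A = U ** dmat d ** transpose U \<and>
     (\<forall>k l. k \<le> l \<longrightarrow> l < CARD('m) \<longrightarrow> d (idx l) \<le> d (idx k))"

lemma orth_UUt: "orthogonal_matrix U \<Longrightarrow> U ** transpose U = mat 1"
  by (simp add: orthogonal_matrix_def)
lemma orth_UtU: "orthogonal_matrix U \<Longrightarrow> transpose U ** U = mat 1"
  by (simp add: orthogonal_matrix_def)

lemma spectral:
  fixes A :: "real^'m::finite^'m"
  assumes sym: "transpose A = A"
  shows "\<exists>U d. spec A U d"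
proof -
  obtain v lam where P: "\<forall>i<CARD('m). norm (v i) = 1 \<and> A *v v i = lam i *\<^sub>R v i \<and>
      (\<forall>j<i. v j \<bullet> v i = 0) \<and> (\<forall>j<i. lam i \<le> lam j) \<and>
      (\<forall>x. (\<forall>j<i. v j \<bullet> x = 0) \<longrightarrow> x \<bullet> (A *v x) \<le> lam i * (x \<bullet> x))"
    using greedy[OF sym, of "CARD('m)"] by auto
  have on: "v i \<bullet> v j = (if i = j then 1 else 0)" if "i < CARD('m)" "j < CARD('m)" for i j
  proof (cases i j rule: linorder_cases)
    case less then show ?thesis using P that by auto
  next
    case equal then show ?thesis using P that by (simp add: norm_eq_1)
  next
    case greater then show ?thesis using P that by (auto simp: inner_commute)
  qed
  define U :: "real^'m^'m" where "U = (\<chi> r c. v (gidx c) $ r)"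
  define d where "d c = lam (gidx c)" for c :: 'm
  have "transpose U ** U = mat 1"
  proof -
    have "(transpose U ** U) $ a $ b = (mat 1 :: real^'m^'m) $ a $ b" for a b
    proof -
      have "(transpose U ** U) $ a $ b = v (gidx a) \<bullet> v (gidx b)"
        by (simp add: matrix_matrix_mult_def transpose_def U_def inner_vec_def)
      also have "\<dots> = (if a = b then 1 else 0)"
        using on[OF gidx_lt gidx_lt] by (metis idx_gidx)
      finally show ?thesis by (simp add: mat_def)
    qed
    then show ?thesis by (simp add: vec_eq_iff)
  qed
  then have oU: "orthogonal_matrix U" by (simp add: orthogonal_matrix)
  have AU: "A ** U = U ** dmat d"
  proof -
    have "(A ** U) $ r $ c = (U ** dmat d) $ r $ c" for r c
    proof -
      have "(A ** U) $ r $ c = (A *v v (gidx c)) $ r"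
        by (simp add: matrix_matrix_mult_def matrix_vector_mult_def U_def)
      also have "\<dots> = lam (gidx c) * v (gidx c) $ r" using P gidx_lt[of c] by simp
      also have "\<dots> = (U ** dmat d) $ r $ c"
        by (simp add: matrix_matrix_mult_def dmat_def U_def d_def if_distrib cong: if_cong)
      finally show ?thesis .
    qed
    then show ?thesis by (simp add: vec_eq_iff)
  qed
  have "A = A ** (U ** transpose U)" using orth_UUt[OF oU] by simp
  also have "\<dots> = U ** dmat d ** transpose U" using AU by (simp add: matrix_mul_assoc)
  finally have eq: "A = U ** dmat d ** transpose U" .
  have "d (idx l) \<le> d (idx k)" if "k \<le> l" "l < CARD('m)" for k l
  proof (cases "k = l")
    case True then show ?thesis by simp
  next
    case False
    then have "k < l" using that by simp
    then show ?thesis using P that unfolding d_def by auto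
  qed
  then show ?thesis using oU eq unfolding spec_def by blast
qed



definition lst :: "('m::finite \<Rightarrow> real) \<Rightarrow> real list" where
  "lst d = map (\<lambda>k. d (idx k)) [0..<CARD('m)]"

lemma prod_nth_list: "(\<Prod>i<length xs. (x::real) - xs!i) = prod_list (map (\<lambda>a. x - a) xs)"
  by (induction xs) (simp_all del: prod.lessThan_Suc add: prod.lessThan_Suc_shift)

definition PL :: "real list \<Rightarrow> real poly" where
  "PL xs = prod_list (map (\<lambda>a. [:-a, 1:]) xs)"

lemma poly_PL: "poly (PL xs) x = prod_list (map (\<lambda>a. x - a) xs)"
  unfolding PL_def by (induction xs) (auto simp: algebra_simps)

lemma degree_PL: "degree (PL xs) = length xs \<and> PL xs \<noteq> 0"
proof (induction xs)
  case Nil then show ?case by (simp add: PL_def)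
next
  case (Cons a xs)
  have "PL (a # xs) = [:-a, 1:] * PL xs" by (simp add: PL_def)
  moreover have "degree ([:-a, 1:] * PL xs) = 1 + degree (PL xs)"
    using Cons by (subst degree_mult_eq) auto
  ultimately show ?case using Cons by auto
qed

lemma PL_unique:
  "sorted_wrt (\<ge>) xs \<Longrightarrow> sorted_wrt (\<ge>) ys \<Longrightarrow> PL xs = PL ys \<Longrightarrow> xs = ys"
proof (induction xs arbitrary: ys)
  case Nil
  then show ?case
    using degree_PL[of ys] degree_PL[of "[]"] by (cases ys) (auto simp del: degree_PL)
next
  case (Cons a xs)
  show ?case
  proof (cases ys)
    case Nil
    then show ?thesis using Cons.prems
      using degree_PL[of ys] degree_PL[of "a # xs"] by auto
  next
    case (Cons b ys')
    have ra: "poly (PL ys) a = 0"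
      using \<open>PL (a # xs) = PL ys\<close>[symmetric] by (simp add: poly_PL)
    then have "a \<in> set ys" by (auto simp: poly_PL prod_list_zero_iff)
    then have "a \<le> b" using Cons.prems(2) \<open>ys = b # ys'\<close> by auto
    have "poly (PL (a#xs)) b = 0"
      using \<open>PL (a # xs) = PL ys\<close> \<open>ys = b # ys'\<close> by (simp add: poly_PL)
    then have "b \<in> set (a#xs)" by (auto simp: poly_PL prod_list_zero_iff)
    then have "b \<le> a" using Cons.prems(1) by auto
    have ab: "a = b" using \<open>a \<le> b\<close> \<open>b \<le> a\<close> by simp
    have "[:-a, 1:] * PL xs = [:-a, 1:] * PL ys'"
      using \<open>PL (a # xs) = PL ys\<close> \<open>ys = b # ys'\<close> ab by (simp add: PL_def)
    moreover have "[:-a, 1:] \<noteq> (0::real poly)" by simp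
    ultimately have "PL xs = PL ys'" by (metis mult_left_cancel)
    then have "xs = ys'" using Cons.IH Cons.prems \<open>ys = b # ys'\<close> by auto
    then show ?thesis using ab \<open>ys = b # ys'\<close> by simp
  qed
qed

lemma roots_unique:
  assumes "sorted_wrt (\<ge>) xs" "sorted_wrt (\<ge>) ys"
    and "\<forall>x. (\<Prod>i<length xs. (x::real) - xs!i) = (\<Prod>i<length ys. x - ys!i)"
  shows "xs = ys"
proof -
  have "poly (PL xs) = poly (PL ys)"
    using assms(3) by (auto simp: poly_PL prod_nth_list)
  then have "PL xs = PL ys" by (simp add: poly_eq_poly_eq_iff)
  then show ?thesis using PL_unique assms by blast
qed

lemma mm_diff_l: "(A::real^'n^'m) ** (B - C) = A ** B - A ** C"
  by (simp add: vec_eq_iff matrix_matrix_mult_def sum_subtractf algebra_simps)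
lemma mm_diff_r: "((A::real^'n^'m) - B) ** C = A ** C - B ** C"
  by (simp add: vec_eq_iff matrix_matrix_mult_def sum_subtractf algebra_simps)
lemma mm_matx: "(A::real^'n^'m) ** mat x = x *\<^sub>R A"
  by (simp add: vec_eq_iff matrix_matrix_mult_def mat_def if_distrib cong: if_cong)
lemma mm_scaleR_l: "(x *\<^sub>R (A::real^'n^'m)) ** B = x *\<^sub>R (A ** B)"
  by (simp add: vec_eq_iff matrix_matrix_mult_def sum_distrib_left algebra_simps)
lemma scaleR_mat1: "x *\<^sub>R (mat 1 :: real^'n^'n) = mat x"
  by (simp add: vec_eq_iff mat_def)

lemma charpoly_spec:
  fixes A :: "real^'m::finite^'m"
  assumes "spec A U d"
  shows "det (mat x - A) = (\<Prod>k<CARD('m). x - d (idx k))"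
proof -
  have oU: "orthogonal_matrix U" and A: "A = U ** dmat d ** transpose U"
    using assms unfolding spec_def by auto
  have "U ** (mat x - dmat d) ** transpose U = mat x - A"
    using orth_UUt[OF oU]
    by (simp add: A mm_diff_l mm_diff_r mm_matx mm_scaleR_l scaleR_mat1)
  then have "det (mat x - A) = det U * det (mat x - dmat d) * det (transpose U)"
    by (metis det_mul)
  also have "\<dots> = det (mat x - dmat d) * (det U * det U)" by simp
  also have "det U * det U = 1" using det_orthogonal_matrix[OF oU] by auto
  also have "det (mat x - dmat d) = (\<Prod>c\<in>UNIV. x - d c)"
    by (subst det_diagonal) (auto simp: dmat_def mat_def)
  also have "\<dots> = (\<Prod>k<CARD('m). x - d (idx k))"
    using prod.reindex_bij_betw[OF idx_bij, of "\<lambda>c. x - d c"] by simp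
  finally show ?thesis by simp
qed

lemma eigvals_spec:
  fixes A :: "real^'m::finite^'m"
  assumes "spec A U d"
  shows "eigvals_desc A = lst d"
  unfolding eigvals_desc_def
proof (rule the_equality)
  have len: "length (lst d) = CARD('m)" by (simp add: lst_def)
  have srt: "sorted_wrt (\<ge>) (lst d)"
    using assms unfolding spec_def lst_def by (auto simp: sorted_wrt_iff_nth_less)
  have "det (mat x - A) = (\<Prod>i<length (lst d). x - lst d ! i)" for x
    using charpoly_spec[OF assms, of x] len by (simp add: lst_def)
  then show "length (lst d) = CARD('m) \<and> sorted_wrt (\<ge>) (lst d) \<and>
      (\<forall>x. det (mat x - A) = (\<Prod>i<length (lst d). x - lst d ! i))"
    using len srt by simp
  fix xs assume xs: "length xs = CARD('m) \<and> sorted_wrt (\<ge>) xs \<and>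
      (\<forall>x. det (mat x - A) = (\<Prod>i<length xs. x - xs ! i))"
  show "xs = lst d"
    by (rule roots_unique) (use xs srt \<open>\<And>x. det (mat x - A) = _\<close> in auto)
qed



lemma abel0:
  fixes b x :: "nat \<Rightarrow> real"
  shows "(\<forall>k l. k \<le> l \<longrightarrow> l < m \<longrightarrow> b l \<le> b k) \<Longrightarrow> (\<forall>l<m. b l \<ge> 0) \<Longrightarrow>
     (\<forall>q\<le>m. (\<Sum>l<q. x l) \<ge> 0) \<Longrightarrow> (\<Sum>l<m. b l * x l) \<ge> 0"
proof (induction m arbitrary: b)
  case 0 then show ?case by simp
next
  case (Suc m)
  define b' where "b' l = b l - b m" for l
  have "(\<Sum>l<m. b' l * x l) \<ge> 0"
    by (rule Suc.IH) (use Suc.prems in \<open>auto simp: b'_def\<close>)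
  moreover have "b m * (\<Sum>l<Suc m. x l) \<ge> 0"
  proof -
    have "b m \<ge> 0" "(\<Sum>l<Suc m. x l) \<ge> 0" using Suc.prems by auto
    then show ?thesis by (rule mult_nonneg_nonneg)
  qed
  moreover have "(\<Sum>l<Suc m. b l * x l) = (\<Sum>l<m. b' l * x l) + b m * (\<Sum>l<Suc m. x l)"
    by (simp add: b'_def sum_distrib_left algebra_simps sum_subtractf)
  ultimately show ?case by simp
qed

lemma abel:
  fixes b x :: "nat \<Rightarrow> real"
  assumes "\<forall>k l. k \<le> l \<longrightarrow> l < m \<longrightarrow> b l \<le> b k"
    and "\<forall>q\<le>m. (\<Sum>l<q. x l) \<ge> 0" and "(\<Sum>l<m. x l) = 0"
  shows "(\<Sum>l<m. b l * x l) \<ge> 0"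
proof (cases m)
  case 0 then show ?thesis by simp
next
  case (Suc m')
  define b' where "b' l = b l - b m'" for l
  have "(\<Sum>l<m. b' l * x l) \<ge> 0"
    by (rule abel0) (use assms Suc in \<open>auto simp: b'_def\<close>)
  moreover have "(\<Sum>l<m. b l * x l) = (\<Sum>l<m. b' l * x l) + b m' * (\<Sum>l<m. x l)"
    by (simp add: b'_def sum_distrib_left algebra_simps sum_subtractf)
  ultimately show ?thesis using assms(3) by simp
qed

lemma wlem:
  fixes a w :: "nat \<Rightarrow> real"
  assumes dec: "\<forall>k l. k \<le> l \<longrightarrow> l < m \<longrightarrow> a l \<le> a k"
    and w: "\<forall>k<m. 0 \<le> w k \<and> w k \<le> 1" and sw: "(\<Sum>k<m. w k) = real q" and q: "q \<le> m"
  shows "(\<Sum>k<m. a k * w k) \<le> (\<Sum>k<q. a k)"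
proof -
  define p where "p = a (q - 1)"
  define ind where "ind k = (if k < q then 1 else (0::real))" for k
  have t: "(a k - p) * (w k - ind k) \<le> 0" if "k < m" for k
  proof (cases "k < q")
    case True
    then have "a k \<ge> p" using dec q unfolding p_def by auto
    moreover have "w k - ind k \<le> 0" using w that True unfolding ind_def by auto
    ultimately show ?thesis by (simp add: mult_nonneg_nonpos)
  next
    case False
    then have "a k \<le> p" using dec q that unfolding p_def by auto
    moreover have "w k - ind k \<ge> 0" using w that False unfolding ind_def by auto
    ultimately show ?thesis by (simp add: mult_nonpos_nonneg)
  qed
  have s1: "(\<Sum>k<m. a k * ind k) = (\<Sum>k<q. a k)"
  proof -
    have "(\<Sum>k<m. a k * ind k) = (\<Sum>k\<in>{..<m} \<inter> {k. k < q}. a k)"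
      by (simp add: ind_def sum.inter_restrict if_distrib cong: if_cong)
    also have "{..<m} \<inter> {k. k < q} = {..<q}" using q by auto
    finally show ?thesis .
  qed
  have s2: "(\<Sum>k<m. ind k) = real q"
  proof -
    have "(\<Sum>k<m. ind k) = (\<Sum>k\<in>{..<m} \<inter> {k. k < q}. (1::real))"
      unfolding ind_def by (subst sum.inter_restrict) auto
    also have "{..<m} \<inter> {k. k < q} = {..<q}" using q by auto
    finally show ?thesis by simp
  qed
  have "(\<Sum>k<m. (a k - p) * (w k - ind k)) \<le> 0"
    using t by (intro sum_nonpos) auto
  moreover have "(\<Sum>k<m. (a k - p) * (w k - ind k)) =
      (\<Sum>k<m. a k * w k) - (\<Sum>k<m. a k * ind k) - p * (\<Sum>k<m. w k) + p * (\<Sum>k<m. ind k)"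
    by (simp add: algebra_simps sum_subtractf sum.distrib sum_distrib_left)
  ultimately show ?thesis using s1 s2 sw by simp
qed

lemma ds_main:
  fixes a b :: "nat \<Rightarrow> real" and S :: "nat \<Rightarrow> nat \<Rightarrow> real"
  assumes da: "\<forall>k l. k \<le> l \<longrightarrow> l < m \<longrightarrow> a l \<le> a k"
    and db: "\<forall>k l. k \<le> l \<longrightarrow> l < m \<longrightarrow> b l \<le> b k"
    and S0: "\<forall>k<m. \<forall>l<m. S k l \<ge> 0"
    and row: "\<forall>k<m. (\<Sum>l<m. S k l) = 1" and col: "\<forall>l<m. (\<Sum>k<m. S k l) = 1"
  shows "(\<Sum>k<m. \<Sum>l<m. S k l * a k * b l) \<le> (\<Sum>k<m. a k * b k)"
proof -
  define c where "c l = (\<Sum>k<m. S k l * a k)" for l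
  define x where "x l = a l - c l" for l
  have lhs: "(\<Sum>k<m. \<Sum>l<m. S k l * a k * b l) = (\<Sum>l<m. b l * c l)"
    unfolding c_def by (subst sum.swap) (simp add: sum_distrib_left algebra_simps)
  have part: "(\<Sum>l<q. x l) \<ge> 0" if q: "q \<le> m" for q
  proof -
    define w where "w k = (\<Sum>l<q. S k l)" for k
    have w01: "\<forall>k<m. 0 \<le> w k \<and> w k \<le> 1"
    proof (intro allI impI conjI)
      fix k assume k: "k < m"
      show "0 \<le> w k" unfolding w_def using S0 k q by (intro sum_nonneg) auto
      have "w k \<le> (\<Sum>l<m. S k l)" unfolding w_def
        using S0 k q by (intro sum_mono2) auto
      then show "w k \<le> 1" using row k by simp
    qed
    have sw: "(\<Sum>k<m. w k) = real q"
    proof -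
      have "(\<Sum>k<m. w k) = (\<Sum>l<q. \<Sum>k<m. S k l)"
        unfolding w_def by (rule sum.swap)
      also have "\<dots> = (\<Sum>l<q. 1)" using col q by (intro sum.cong) auto
      finally show ?thesis by simp
    qed
    have "(\<Sum>l<q. c l) = (\<Sum>k<m. a k * w k)"
      unfolding c_def w_def by (subst sum.swap) (simp add: sum_distrib_left algebra_simps)
    also have "\<dots> \<le> (\<Sum>k<q. a k)" by (rule wlem[OF da w01 sw q])
    finally show ?thesis unfolding x_def by (simp add: sum_subtractf)
  qed
  have tot: "(\<Sum>l<m. x l) = 0"
  proof -
    have "(\<Sum>l<m. c l) = (\<Sum>k<m. a k * (\<Sum>l<m. S k l))"
      unfolding c_def by (subst sum.swap) (simp add: sum_distrib_left algebra_simps)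
    also have "\<dots> = (\<Sum>k<m. a k)" using row by simp
    finally show ?thesis unfolding x_def by (simp add: sum_subtractf)
  qed
  have "(\<Sum>l<m. b l * x l) \<ge> 0" using abel[OF db] part tot by auto
  then show ?thesis unfolding lhs x_def by (simp add: algebra_simps sum_subtractf)
qed



lemma ifz_mult_l[simp]: "(if P then (x::real) else 0) * y = (if P then x * y else 0)" by simp
lemma ifz_mult_r[simp]: "y * (if P then (x::real) else 0) = (if P then y * x else 0)" by simp
lemma ifz_pow[simp]: "(if P then (x::real) else 0)^2 = (if P then x^2 else 0)" by simp

lemma norm_sq_vec: "(norm (x::real^'n))^2 = (\<Sum>i\<in>UNIV. (x$i)^2)"
  unfolding power2_norm_eq_inner by (simp add: inner_vec_def power2_eq_square)

lemma norm_sq_mat: "(norm (M::real^'n^'m))^2 = (\<Sum>i\<in>UNIV. \<Sum>j\<in>UNIV. (M$i$j)^2)"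
  unfolding power2_norm_eq_inner by (simp add: inner_vec_def power2_eq_square)

lemma orth_norm_vec:
  assumes "orthogonal_matrix (Q::real^'n^'n)"
  shows "norm (Q *v x) = norm x"
proof -
  have "orthogonal_transformation (\<lambda>x. Q *v x)"
    using orthogonal_transformation_matrix[of "\<lambda>x. Q *v x"] assms by simp
  then show ?thesis by (simp add: orthogonal_transformation_def norm_eq_sqrt_inner)
qed

lemma col_mult: "column j (Q ** M) = (Q::real^'n^'m) *v column j M"
  by (simp add: vec_eq_iff column_def matrix_matrix_mult_def matrix_vector_mult_def)

lemma norm_sq_cols: "(norm (M::real^'n^'m))^2 = (\<Sum>j\<in>UNIV. (norm (column j M))^2)"
  unfolding norm_sq_mat norm_sq_vec column_def by (subst sum.swap) simp

lemma sq_eq_norm: "(x::real) \<ge> 0 \<Longrightarrow> y \<ge> 0 \<Longrightarrow> x^2 = y^2 \<Longrightarrow> x = y"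
  by (simp add: power2_eq_iff_nonneg)

lemma frob_left:
  assumes "orthogonal_matrix (Q::real^'m^'m)"
  shows "norm (Q ** M) = norm (M::real^'n^'m)"
proof (rule sq_eq_norm)
  show "(norm (Q ** M))^2 = (norm M)^2"
    unfolding norm_sq_cols col_mult orth_norm_vec[OF assms] ..
qed auto

lemma norm_transpose: "norm (transpose (M::real^'n^'m)) = norm M"
proof (rule sq_eq_norm)
  show "(norm (transpose M))^2 = (norm M)^2"
    unfolding norm_sq_mat transpose_def by (subst sum.swap) simp
qed auto

lemma frob_right:
  assumes "orthogonal_matrix (Q::real^'n^'n)"
  shows "norm (M ** Q) = norm (M::real^'n^'m)"
proof -
  have "norm (M ** Q) = norm (transpose (M ** Q))" by (simp add: norm_transpose)
  also have "\<dots> = norm (transpose Q ** transpose M)" by (simp add: matrix_transpose_mul)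
  also have "\<dots> = norm (transpose M)" using assms by (simp add: frob_left)
  finally show ?thesis by (simp add: norm_transpose)
qed

lemma orth_rowsum: "orthogonal_matrix (V::real^'n^'n) \<Longrightarrow> (\<Sum>c\<in>UNIV. (V$i$c)^2) = 1"
proof -
  assume "orthogonal_matrix V"
  then have "(V ** transpose V) $ i $ i = 1" by (simp add: orth_UUt mat_def)
  then show ?thesis by (simp add: matrix_matrix_mult_def transpose_def power2_eq_square)
qed

lemma orth_colsum: "orthogonal_matrix (V::real^'n^'n) \<Longrightarrow> (\<Sum>r\<in>UNIV. (V$r$c)^2) = 1"
proof -
  assume "orthogonal_matrix V"
  then have "(transpose V ** V) $ c $ c = 1" by (simp add: orth_UtU mat_def)
  then show ?thesis by (simp add: matrix_matrix_mult_def transpose_def power2_eq_square)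
qed

lemma spec_AU: "spec A U d \<Longrightarrow> A ** U = U ** dmat d"
proof -
  assume s: "spec A U d"
  then have "A ** U = U ** (dmat d ** (transpose U ** U))"
    unfolding spec_def by (simp add: matrix_mul_assoc)
  then show ?thesis using s unfolding spec_def by (simp add: orth_UtU)
qed

lemma spec_UtA: "spec A U d \<Longrightarrow> transpose U ** A = dmat d ** transpose U"
proof -
  assume s: "spec A U d"
  then have "transpose U ** A = (transpose U ** U) ** dmat d ** transpose U"
    unfolding spec_def by (simp add: matrix_mul_assoc)
  then show ?thesis using s unfolding spec_def by (simp add: orth_UtU)
qed

lemma sum_idx: "(\<Sum>r\<in>UNIV. f r) = (\<Sum>k<CARD('m). f (idx k :: 'm::finite))"
  using sum.reindex_bij_betw[OF idx_bij, of f] by simp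

lemma eucl_lst: "eucl_dist (lst (a::'m::finite \<Rightarrow> real)) (lst (b::'m::finite \<Rightarrow> real)) =
    sqrt (\<Sum>k<CARD('m). (a (idx k) - b (idx k))^2)"
  by (simp add: eucl_dist_def lst_def)

lemma dmat_diff_entry:
  "(dmat a ** V - V ** dmat b) $ r $ c = (a r - b c) * (V::real^'m::finite^'m) $ r $ c"
  by (simp add: matrix_matrix_mult_def dmat_def algebra_simps)

lemma frob_lower:
  fixes A B :: "real^'m::finite^'m"
  assumes sA: "spec A U a" and sB: "spec B W b" and oP: "orthogonal_matrix P"
  shows "eucl_dist (lst a) (lst b) \<le> frob_norm (A ** P - P ** B)"
proof -
  have oU: "orthogonal_matrix U" and oW: "orthogonal_matrix W"
    using sA sB unfolding spec_def by auto
  define V where "V = transpose U ** P ** W"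
  have oV: "orthogonal_matrix V" unfolding V_def
    using oU oW oP by (simp add: orthogonal_matrix_mul)
  have e1: "transpose U ** (A ** P) ** W = dmat a ** V"
    unfolding V_def using spec_UtA[OF sA] by (simp add: matrix_mul_assoc)
  have e2: "transpose U ** (P ** B) ** W = V ** dmat b"
  proof -
    have "transpose U ** (P ** B) ** W = transpose U ** (P ** (B ** W))"
      by (simp add: matrix_mul_assoc)
    also have "\<dots> = V ** dmat b" unfolding V_def spec_AU[OF sB] by (simp add: matrix_mul_assoc)
    finally show ?thesis .
  qed
  have key: "transpose U ** (A ** P - P ** B) ** W = dmat a ** V - V ** dmat b"
    using e1 e2 by (simp add: mm_diff_l mm_diff_r)
  have nrm: "frob_norm (A ** P - P ** B) = norm (dmat a ** V - V ** dmat b)"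
    unfolding frob_norm_def key[symmetric] using oU oW
    by (simp add: frob_left frob_right)
  define S where "S k l = (V $ idx k $ idx l)^2" for k l
  define a' where "a' k = a (idx k)" for k
  define b' where "b' k = b (idx k)" for k
  let ?m = "CARD('m)"
  have sq: "(norm (dmat a ** V - V ** dmat b))^2 = (\<Sum>k<?m. \<Sum>l<?m. S k l * (a' k - b' l)^2)"
  proof -
    have "(norm (dmat a ** V - V ** dmat b))^2 = (\<Sum>r\<in>UNIV. \<Sum>c\<in>UNIV. (V$r$c)^2 * (a r - b c)^2)"
      unfolding norm_sq_mat dmat_diff_entry by (simp add: power_mult_distrib mult.commute)
    also have "\<dots> = (\<Sum>k<?m. \<Sum>l<?m. S k l * (a' k - b' l)^2)"
      by (simp add: sum_idx[where 'm='m] S_def a'_def b'_def)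
    finally show ?thesis .
  qed
  have S0: "\<forall>k<?m. \<forall>l<?m. S k l \<ge> 0" unfolding S_def by simp
  have row: "\<forall>k<?m. (\<Sum>l<?m. S k l) = 1"
    unfolding S_def using orth_rowsum[OF oV, unfolded sum_idx] by simp
  have col: "\<forall>l<?m. (\<Sum>k<?m. S k l) = 1"
    unfolding S_def using orth_colsum[OF oV, unfolded sum_idx] by simp
  have da: "\<forall>k l. k \<le> l \<longrightarrow> l < ?m \<longrightarrow> a' l \<le> a' k" using sA unfolding spec_def a'_def by auto
  have db: "\<forall>k l. k \<le> l \<longrightarrow> l < ?m \<longrightarrow> b' l \<le> b' k" using sB unfolding spec_def b'_def by auto
  have main: "(\<Sum>k<?m. \<Sum>l<?m. S k l * a' k * b' l) \<le> (\<Sum>k<?m. a' k * b' k)"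
    by (rule ds_main[OF da db S0 row col])
  have exp: "(\<Sum>k<?m. \<Sum>l<?m. S k l * (a' k - b' l)^2) =
      (\<Sum>k<?m. a' k ^ 2) + (\<Sum>l<?m. b' l ^ 2) - 2 * (\<Sum>k<?m. \<Sum>l<?m. S k l * a' k * b' l)"
  proof -
    have "(\<Sum>k<?m. \<Sum>l<?m. S k l * (a' k - b' l)^2) =
      (\<Sum>k<?m. a' k ^ 2 * (\<Sum>l<?m. S k l)) + (\<Sum>l<?m. b' l ^ 2 * (\<Sum>k<?m. S k l))
        - 2 * (\<Sum>k<?m. \<Sum>l<?m. S k l * a' k * b' l)"
      apply (simp add: power2_diff sum_distrib_left sum_distrib_right algebra_simps sum.distrib sum_subtractf)
      apply (subst (2) sum.swap)
      apply (simp add: algebra_simps)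
      done
    then show ?thesis using row col by simp
  qed
  have exp2: "(\<Sum>k<?m. (a' k - b' k)^2) = (\<Sum>k<?m. a' k ^ 2) + (\<Sum>l<?m. b' l ^ 2) - 2 * (\<Sum>k<?m. a' k * b' k)"
    by (simp add: power2_diff sum.distrib sum_subtractf sum_distrib_left algebra_simps)
  have "(\<Sum>k<?m. (a' k - b' k)^2) \<le> (norm (dmat a ** V - V ** dmat b))^2"
    using sq exp exp2 main by simp
  from real_sqrt_le_mono[OF this] have "sqrt (\<Sum>k<?m. (a' k - b' k)^2) \<le> norm (dmat a ** V - V ** dmat b)"
    by simp
  then show ?thesis unfolding nrm eucl_lst a'_def b'_def .
qed

lemma AP_PB_form:
  assumes sA: "spec A U a" and sB: "spec B W b"
  shows "A ** (U ** transpose W) - (U ** transpose W) ** B = U ** (dmat a - dmat b) ** transpose W"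
proof -
  have "A ** (U ** transpose W) = U ** dmat a ** transpose W"
    using spec_AU[OF sA] by (simp add: matrix_mul_assoc)
  moreover have "(U ** transpose W) ** B = U ** dmat b ** transpose W"
  proof -
    have "(U ** transpose W) ** B = U ** (transpose W ** B)" by (simp add: matrix_mul_assoc)
    then show ?thesis using spec_UtA[OF sB] by (simp add: matrix_mul_assoc)
  qed
  ultimately show ?thesis by (simp add: mm_diff_l mm_diff_r)
qed

lemma dmat_diff: "dmat a - dmat b = dmat (\<lambda>r. a r - b r)"
  by (simp add: vec_eq_iff dmat_def)

lemma frob_attain:
  fixes A B :: "real^'m::finite^'m"
  assumes sA: "spec A U a" and sB: "spec B W b"
  shows "frob_norm (A ** (U ** transpose W) - (U ** transpose W) ** B) = eucl_dist (lst a) (lst b)"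
proof -
  have oU: "orthogonal_matrix U" and oW: "orthogonal_matrix W"
    using sA sB unfolding spec_def by auto
  have "frob_norm (A ** (U ** transpose W) - (U ** transpose W) ** B) = norm (dmat (\<lambda>r. a r - b r))"
    unfolding frob_norm_def AP_PB_form[OF sA sB] dmat_diff using oU oW
    by (simp add: frob_left frob_right)
  also have "\<dots> = sqrt ((norm (dmat (\<lambda>r. a r - b r)))^2)" by simp
  also have "(norm (dmat (\<lambda>r. a r - b r)))^2 = (\<Sum>r\<in>UNIV. (a r - b r)^2)"
    unfolding norm_sq_mat by (simp add: dmat_def)
  finally show ?thesis unfolding eucl_lst sum_idx by simp
qed



lemma orth_inner:
  assumes "orthogonal_matrix (Q::real^'n^'n)"
  shows "(Q *v v) \<bullet> (Q *v w) = v \<bullet> w"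
proof -
  have "orthogonal_transformation (\<lambda>x. Q *v x)"
    using orthogonal_transformation_matrix[of "\<lambda>x. Q *v x"] assms by simp
  then show ?thesis by (simp add: orthogonal_transformation_def)
qed

lemma dmat_mv: "(dmat d *v y) $ r = d r * y $ r"
  by (simp add: matrix_vector_mult_def dmat_def)

lemma quad_spec:
  assumes s: "spec A U a"
  shows "(U *v y) \<bullet> (A *v (U *v y)) = (\<Sum>r\<in>UNIV. a r * (y$r)^2)"
proof -
  have oU: "orthogonal_matrix U" using s unfolding spec_def by auto
  have "A *v (U *v y) = U *v (dmat a *v y)"
    by (simp add: matrix_vector_mul_assoc spec_AU[OF s])
  then have "(U *v y) \<bullet> (A *v (U *v y)) = y \<bullet> (dmat a *v y)"
    by (simp add: orth_inner[OF oU])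
  also have "\<dots> = (\<Sum>r\<in>UNIV. a r * (y$r)^2)"
    by (simp add: inner_vec_def dmat_mv power2_eq_square algebra_simps)
  finally show ?thesis .
qed

lemma subspace_coord: "subspace {y::real^'n. \<forall>i. i \<notin> d \<longrightarrow> y$i = 0}"
  by (simp add: subspace_def)

lemma dim_coord: "dim {y::real^'n. \<forall>i. i \<notin> d \<longrightarrow> y$i = 0} = card d"
  using dim_substandard_cart[where 'a=real and 'n='n, of d] unfolding dim_vec_eq .

lemma orth_inj: "orthogonal_matrix (U::real^'n^'n) \<Longrightarrow> inj (\<lambda>y. U *v y)"
  by (metis (no_types, lifting) inj_on_inverseI matrix_vector_mul_assoc matrix_vector_mul_lid orth_UtU)

lemma weyl1:
  fixes A C :: "real^'m::finite^'m"
  assumes sA: "spec A U a" and sC: "spec C W c" and k: "k < CARD('m)"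
    and bnd: "\<forall>x. x \<bullet> ((A - C) *v x) \<le> e * (x \<bullet> x)"
  shows "a (idx k) \<le> c (idx k) + e"
proof -
  let ?m = "CARD('m)"
  have oU: "orthogonal_matrix U" and oW: "orthogonal_matrix W"
    using sA sC unfolding spec_def by auto
  define dX where "dX = (idx ` {..k} :: 'm set)"
  define dY where "dY = (idx ` {k..<?m} :: 'm set)"
  define SX where "SX = {y::real^'m. \<forall>i. i \<notin> dX \<longrightarrow> y$i = 0}"
  define SY where "SY = {y::real^'m. \<forall>i. i \<notin> dY \<longrightarrow> y$i = 0}"
  define X where "X = (\<lambda>y. U *v y) ` SX"
  define Y where "Y = (\<lambda>y. W *v y) ` SY"
  have inj_idx: "inj_on (idx :: nat \<Rightarrow> 'm) {..<?m}" using idx_bij by (auto simp: bij_betw_def)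
  have cX: "card dX = Suc k" unfolding dX_def
    using k by (subst card_image) (auto intro: inj_on_subset[OF inj_idx])
  have cY: "card dY = ?m - k" unfolding dY_def
    by (subst card_image) (auto intro: inj_on_subset[OF inj_idx])
  have linU: "linear (\<lambda>y. U *v y)" and linW: "linear (\<lambda>y. W *v y)" by simp_all
  have dX: "dim X = Suc k" unfolding X_def
    using eucl.dim_image_eq[OF linU, of SX] orth_inj[OF oU] dim_coord[of dX] cX
    unfolding SX_def by (simp add: inj_on_subset)
  have dY: "dim Y = ?m - k" unfolding Y_def
    using eucl.dim_image_eq[OF linW, of SY] orth_inj[OF oW] dim_coord[of dY] cY
    unfolding SY_def by (simp add: inj_on_subset)
  have subX: "subspace X" unfolding X_def SX_def
    by (rule linear_subspace_image[OF linU subspace_coord])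
  have subY: "subspace Y" unfolding Y_def SY_def
    by (rule linear_subspace_image[OF linW subspace_coord])
  have "dim {x + y |x y. x \<in> X \<and> y \<in> Y} + dim (X \<inter> Y) = dim X + dim Y"
    by (rule dim_sums_Int[OF subX subY])
  moreover have "dim {x + y |x y. x \<in> X \<and> y \<in> Y} \<le> ?m" by (rule dim_subset_UNIV_cart)
  ultimately have "dim (X \<inter> Y) \<noteq> 0" using dX dY k by linarith
  then obtain x where xXY: "x \<in> X" "x \<in> Y" and x0: "x \<noteq> 0" by auto
  obtain y where y: "y \<in> SX" "x = U *v y" using xXY unfolding X_def by auto
  obtain z where z: "z \<in> SY" "x = W *v z" using xXY unfolding Y_def by auto
  have yy: "y \<bullet> y = x \<bullet> x" using y orth_inner[OF oU] by simp
  have zz: "z \<bullet> z = x \<bullet> x" using z orth_inner[OF oW] by simp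
  have lowA: "a (idx k) * (x \<bullet> x) \<le> x \<bullet> (A *v x)"
  proof -
    have "a (idx k) * (x \<bullet> x) = (\<Sum>r\<in>UNIV. a (idx k) * (y$r)^2)"
      unfolding yy[symmetric] by (simp add: inner_vec_def power2_eq_square sum_distrib_left)
    also have "\<dots> \<le> (\<Sum>r\<in>UNIV. a r * (y$r)^2)"
    proof (rule sum_mono)
      fix r :: 'm
      show "a (idx k) * (y$r)^2 \<le> a r * (y$r)^2"
      proof (cases "r \<in> dX")
        case True
        then obtain p where p: "p \<le> k" "r = idx p" unfolding dX_def by auto
        then have "a (idx k) \<le> a r" using sA k unfolding spec_def by auto
        then show ?thesis by (simp add: mult_right_mono)
      next
        case False
        then show ?thesis using y(1) unfolding SX_def by simp
      qed
    qed
    also have "\<dots> = x \<bullet> (A *v x)" using quad_spec[OF sA, of y] y(2) by simp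
    finally show ?thesis .
  qed
  have upC: "x \<bullet> (C *v x) \<le> c (idx k) * (x \<bullet> x)"
  proof -
    have "x \<bullet> (C *v x) = (\<Sum>r\<in>UNIV. c r * (z$r)^2)" using quad_spec[OF sC, of z] z(2) by simp
    also have "\<dots> \<le> (\<Sum>r\<in>UNIV. c (idx k) * (z$r)^2)"
    proof (rule sum_mono)
      fix r :: 'm
      show "c r * (z$r)^2 \<le> c (idx k) * (z$r)^2"
      proof (cases "r \<in> dY")
        case True
        then obtain p where p: "k \<le> p" "p < ?m" "r = idx p" unfolding dY_def by auto
        then have "c r \<le> c (idx k)" using sC unfolding spec_def by auto
        then show ?thesis by (simp add: mult_right_mono)
      next
        case False
        then show ?thesis using z(1) unfolding SY_def by simp
      qed
    qed
    also have "\<dots> = c (idx k) * (x \<bullet> x)"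
      unfolding zz[symmetric] by (simp add: inner_vec_def power2_eq_square sum_distrib_left)
    finally show ?thesis .
  qed
  have "x \<bullet> ((A - C) *v x) = x \<bullet> (A *v x) - x \<bullet> (C *v x)"
    by (simp add: matrix_vector_mult_diff_rdistrib inner_diff_right)
  then have "a (idx k) * (x \<bullet> x) \<le> c (idx k) * (x \<bullet> x) + e * (x \<bullet> x)"
    using lowA upC bnd by smt
  moreover have "x \<bullet> x > 0" using x0 by simp
  ultimately show ?thesis by (simp add: distrib_right[symmetric])
qed



lemma card_pos: "0 < CARD('m::finite)" by simp

lemma inf_lst: "inf_dist (lst (a::'m::finite \<Rightarrow> real)) (lst (b::'m \<Rightarrow> real)) =
    Max ((\<lambda>k. \<bar>a (idx k) - b (idx k)\<bar>) ` {..<CARD('m)})"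
proof -
  have "lst a \<noteq> []" using card_pos[where 'm='m] by (simp add: lst_def)
  then show ?thesis unfolding inf_dist_def by (simp add: lst_def)
qed

lemma orth_norm_vecT: "orthogonal_matrix (P::real^'n^'n) \<Longrightarrow> norm (transpose P *v x) = norm x"
  by (rule orth_norm_vec) simp

lemma op_lower:
  fixes A B :: "real^'m::finite^'m"
  assumes sA: "spec A U a" and sB: "spec B W b" and oP: "orthogonal_matrix P"
  shows "inf_dist (lst a) (lst b) \<le> op2_norm (A ** P - P ** B)"
proof -
  define M where "M = A ** P - P ** B"
  define C where "C = P ** B ** transpose P"
  define e where "e = op2_norm M"
  have oW: "orthogonal_matrix W" using sB unfolding spec_def by auto
  have sC: "spec C (P ** W) b"
  proof -
    have "C = (P ** W) ** dmat b ** transpose (P ** W)"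
      using sB unfolding C_def spec_def by (simp add: matrix_transpose_mul matrix_mul_assoc)
    then show ?thesis using sB oP oW unfolding spec_def by (simp add: orthogonal_matrix_mul)
  qed
  have AC: "A - C = M ** transpose P"
  proof -
    have "A ** P ** transpose P = A" using orth_UUt[OF oP] by (simp add: matrix_mul_assoc[symmetric])
    then show ?thesis unfolding M_def C_def by (simp add: mm_diff_r)
  qed
  have bl: "bounded_linear (\<lambda>x. M *v x)" by (rule matrix_vector_mul_bounded_linear)
  have nb: "\<bar>x \<bullet> ((A - C) *v x)\<bar> \<le> e * (x \<bullet> x)" for x
  proof -
    have n1: "norm ((A - C) *v x) \<le> e * norm x"
    proof -
      have "(A - C) *v x = M *v (transpose P *v x)"
        unfolding AC by (rule matrix_vector_mul_assoc[symmetric])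
      then have "norm ((A - C) *v x) = norm (M *v (transpose P *v x))" by (rule arg_cong)
      also have "\<dots> \<le> e * norm (transpose P *v x)"
        unfolding e_def op2_norm_def by (rule onorm[OF bl])
      also have "norm (transpose P *v x) = norm x" by (rule orth_norm_vecT[OF oP])
      finally show ?thesis .
    qed
    have "\<bar>x \<bullet> ((A - C) *v x)\<bar> \<le> norm x * norm ((A - C) *v x)"
      by (rule Cauchy_Schwarz_ineq2)
    also have "\<dots> \<le> norm x * (e * norm x)" using n1 by (simp add: mult_left_mono)
    finally have "\<bar>x \<bullet> ((A - C) *v x)\<bar> \<le> norm x * (e * norm x)" .
    then show ?thesis by (simp add: power2_norm_eq_inner[symmetric] power2_eq_square algebra_simps)
  qed
  have b1: "\<forall>x. x \<bullet> ((A - C) *v x) \<le> e * (x \<bullet> x)" using nb abs_le_D1 by blast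
  have b2: "\<forall>x. x \<bullet> ((C - A) *v x) \<le> e * (x \<bullet> x)"
  proof
    fix x
    have "x \<bullet> ((C - A) *v x) = - (x \<bullet> ((A - C) *v x))"
      by (simp add: matrix_vector_mult_diff_rdistrib inner_diff_right)
    then show "x \<bullet> ((C - A) *v x) \<le> e * (x \<bullet> x)" using nb[of x] by linarith
  qed
  have "\<bar>a (idx k) - b (idx k)\<bar> \<le> e" if k: "k < CARD('m)" for k
    using weyl1[OF sA sC k b1] weyl1[OF sC sA k b2] by linarith
  then show ?thesis unfolding inf_lst e_def M_def
    using card_pos[where 'm='m] by (subst Max_le_iff) (auto simp: lessThan_empty_iff)
qed

lemma op_attain:
  fixes A B :: "real^'m::finite^'m"
  assumes sA: "spec A U a" and sB: "spec B W b"
  shows "op2_norm (A ** (U ** transpose W) - (U ** transpose W) ** B) = inf_dist (lst a) (lst b)"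
proof -
  have oU: "orthogonal_matrix U" and oW: "orthogonal_matrix W"
    using sA sB unfolding spec_def by auto
  define e where "e r = a r - b r" for r
  define M where "M = U ** dmat e ** transpose W"
  have eqM: "A ** (U ** transpose W) - (U ** transpose W) ** B = M"
    unfolding M_def AP_PB_form[OF sA sB] dmat_diff e_def ..
  define mu where "mu = Max (range (\<lambda>r. \<bar>e r\<bar>))"
  have mu_ge: "\<bar>e r\<bar> \<le> mu" for r unfolding mu_def by simp
  have "mu \<in> range (\<lambda>r. \<bar>e r\<bar>)" unfolding mu_def by (rule Max_in) auto
  then obtain r0 where r0: "\<bar>e r0\<bar> = mu" by auto
  have Mx: "M *v x = U *v (dmat e *v (transpose W *v x))" for x
    unfolding M_def by (simp only: matrix_vector_mul_assoc matrix_mul_assoc)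
  have bl: "bounded_linear (\<lambda>x. M *v x)" by (rule matrix_vector_mul_bounded_linear)
  have dnorm: "norm (dmat e *v y) \<le> mu * norm y" for y
  proof (rule power2_le_imp_le)
    have "(norm (dmat e *v y))^2 = (\<Sum>r\<in>UNIV. (e r)^2 * (y$r)^2)"
      by (simp add: norm_sq_vec dmat_mv power_mult_distrib)
    also have "\<dots> \<le> (\<Sum>r\<in>UNIV. mu^2 * (y$r)^2)"
    proof (rule sum_mono)
      fix r
      have "(e r)^2 \<le> mu^2" using mu_ge[of r] by (metis abs_ge_zero power2_abs power_mono)
      then show "(e r)^2 * (y$r)^2 \<le> mu^2 * (y$r)^2" by (simp add: mult_right_mono)
    qed
    also have "\<dots> = (mu * norm y)^2"
      by (simp add: norm_sq_vec power_mult_distrib sum_distrib_left)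
    finally show "(norm (dmat e *v y))^2 \<le> (mu * norm y)^2" .
    show "0 \<le> mu * norm y" using mu_ge[of r0] by simp
  qed
  have up: "onorm (\<lambda>x. M *v x) \<le> mu"
  proof (rule onorm_le)
    fix x
    have "norm (M *v x) = norm (dmat e *v (transpose W *v x))" by (simp add: Mx oU orth_norm_vec)
    also have "\<dots> \<le> mu * norm (transpose W *v x)" by (rule dnorm)
    also have "norm (transpose W *v x) = norm x" by (rule orth_norm_vecT[OF oW])
    finally show "norm (M *v x) \<le> mu * norm x" .
  qed
  have lo: "mu \<le> onorm (\<lambda>x. M *v x)"
  proof -
    define x where "x = W *v axis r0 1"
    have tx: "transpose W *v x = axis r0 1"
      unfolding x_def by (simp add: matrix_vector_mul_assoc orth_UtU[OF oW])
    have nx: "norm x = 1" unfolding x_def using oW by (simp add: orth_norm_vec)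
    have "dmat e *v axis r0 1 = e r0 *\<^sub>R axis r0 1"
      by (simp add: vec_eq_iff dmat_mv axis_def)
    have "M *v x = U *v (dmat e *v axis r0 1)" by (simp only: Mx tx)
    then have "norm (M *v x) = norm (dmat e *v axis r0 1)" by (simp add: oU orth_norm_vec)
    also have "\<dots> = mu" using r0 \<open>dmat e *v axis r0 1 = e r0 *\<^sub>R axis r0 1\<close> by simp
    finally have "norm (M *v x) = mu" .
    then show ?thesis using le_onorm[OF bl, of x] nx by simp
  qed
  have "op2_norm M = mu" unfolding op2_norm_def using up lo by simp
  moreover have "inf_dist (lst a) (lst b) = mu"
  proof -
    have "(\<lambda>k. \<bar>a (idx k) - b (idx k)\<bar>) ` {..<CARD('m)} = (\<lambda>r. \<bar>e r\<bar>) ` (idx ` {..<CARD('m)})"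
      unfolding e_def by (simp add: image_image)
    also have "idx ` {..<CARD('m)} = (UNIV :: 'm set)" using idx_bij[where 'm='m] by (simp add: bij_betw_def)
    finally show ?thesis unfolding inf_lst mu_def by simp
  qed
  ultimately show ?thesis using eqM by simp
qed

lemma sync_mem:
  assumes "\<forall>i<n. orthogonal_matrix (U i :: real^'m::finite^'m)"
  shows "(\<lambda>i j. U i ** transpose (U j)) \<in> sync_set n"
  unfolding sync_set_def
proof (intro CollectI conjI allI impI)
  fix i j assume "i < n" "j < n"
  then show "orthogonal_matrix (U i ** transpose (U j))"
    using assms by (simp add: orthogonal_matrix_mul)
next
  fix i j k assume "i < n" "j < n" "k < n"
  then have e: "transpose (U k) ** U k = mat 1" using assms orth_UtU by blast
  have "U i ** transpose (U k) ** (U k ** transpose (U j)) = U i ** (transpose (U k) ** U k) ** transpose (U j)"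
    by (simp add: matrix_mul_assoc)
  then show "U i ** transpose (U k) ** (U k ** transpose (U j)) = U i ** transpose (U j)"
    using e by simp
next
  fix i assume "i < n"
  then show "U i ** transpose (U i) = mat 1" using assms orth_UUt by blast
qed

theorem theorem7:
  fixes n :: nat and A :: "nat \<Rightarrow> real^'m::finite^'m"
  assumes "\<forall>i<n. symmetric_mat (A i)"
  shows "is_dG frob_norm n A
           ((1/2) * (\<Sum>i<n. \<Sum>j<n. eucl_dist (eigvals_desc (A i)) (eigvals_desc (A j))))
       \<and> is_dG op2_norm n A
           ((1/2) * (\<Sum>i<n. \<Sum>j<n. inf_dist (eigvals_desc (A i)) (eigvals_desc (A j))))"
proof -
  define UU where "UU i = (SOME U. \<exists>d. spec (A i) U d)" for i
  define dd where "dd i = (SOME d. spec (A i) (UU i) d)" for i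
  have sp: "spec (A i) (UU i) (dd i)" if i: "i < n" for i
  proof -
    have "\<exists>U d. spec (A i) U d" using spectral assms i unfolding symmetric_mat_def by blast
    then have "\<exists>d. spec (A i) (UU i) d" unfolding UU_def by (rule someI_ex)
    then show ?thesis unfolding dd_def by (rule someI_ex)
  qed
  have ev: "eigvals_desc (A i) = lst (dd i)" if "i < n" for i
    using eigvals_spec[OF sp[OF that]] .
  have oU: "\<forall>i<n. orthogonal_matrix (UU i)" using sp unfolding spec_def by blast
  define P0 where "P0 = (\<lambda>i j. UU i ** transpose (UU j))"
  have P0: "P0 \<in> sync_set n" unfolding P0_def by (rule sync_mem[OF oU])
  have orthP: "orthogonal_matrix (P i j)" if "P \<in> sync_set n" "i < n" "j < n" for P i j
    using that unfolding sync_set_def by blast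
  have F: "is_dG frob_norm n A
           ((1/2) * (\<Sum>i<n. \<Sum>j<n. eucl_dist (eigvals_desc (A i)) (eigvals_desc (A j))))"
    unfolding is_dG_def
  proof
    have "dG_cost frob_norm n A P0 =
        (1/2) * (\<Sum>i<n. \<Sum>j<n. eucl_dist (eigvals_desc (A i)) (eigvals_desc (A j)))"
      unfolding dG_cost_def sdist_def P0_def
      by (intro arg_cong[where f="\<lambda>x. (1/2) * x"] sum.cong refl)
         (simp add: frob_attain[OF sp sp] ev)
    then show "\<exists>P\<in>sync_set n. dG_cost frob_norm n A P =
        (1/2) * (\<Sum>i<n. \<Sum>j<n. eucl_dist (eigvals_desc (A i)) (eigvals_desc (A j)))"
      using P0 by blast
    show "\<forall>P\<in>sync_set n. (1/2) * (\<Sum>i<n. \<Sum>j<n. eucl_dist (eigvals_desc (A i)) (eigvals_desc (A j)))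
        \<le> dG_cost frob_norm n A P"
    proof
      fix P :: "nat \<Rightarrow> nat \<Rightarrow> real^'m^'m" assume P: "P \<in> sync_set n"
      show "(1/2) * (\<Sum>i<n. \<Sum>j<n. eucl_dist (eigvals_desc (A i)) (eigvals_desc (A j)))
        \<le> dG_cost frob_norm n A P"
        unfolding dG_cost_def sdist_def
        by (intro mult_left_mono sum_mono) (auto simp: ev intro!: frob_lower[OF sp sp orthP[OF P]])
    qed
  qed
  have O: "is_dG op2_norm n A
           ((1/2) * (\<Sum>i<n. \<Sum>j<n. inf_dist (eigvals_desc (A i)) (eigvals_desc (A j))))"
    unfolding is_dG_def
  proof
    have "dG_cost op2_norm n A P0 =
        (1/2) * (\<Sum>i<n. \<Sum>j<n. inf_dist (eigvals_desc (A i)) (eigvals_desc (A j)))"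
      unfolding dG_cost_def sdist_def P0_def
      by (intro arg_cong[where f="\<lambda>x. (1/2) * x"] sum.cong refl)
         (simp add: op_attain[OF sp sp] ev)
    then show "\<exists>P\<in>sync_set n. dG_cost op2_norm n A P =
        (1/2) * (\<Sum>i<n. \<Sum>j<n. inf_dist (eigvals_desc (A i)) (eigvals_desc (A j)))"
      using P0 by blast
    show "\<forall>P\<in>sync_set n. (1/2) * (\<Sum>i<n. \<Sum>j<n. inf_dist (eigvals_desc (A i)) (eigvals_desc (A j)))
        \<le> dG_cost op2_norm n A P"
    proof
      fix P :: "nat \<Rightarrow> nat \<Rightarrow> real^'m^'m" assume P: "P \<in> sync_set n"
      show "(1/2) * (\<Sum>i<n. \<Sum>j<n. inf_dist (eigvals_desc (A i)) (eigvals_desc (A j)))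
        \<le> dG_cost op2_norm n A P"
        unfolding dG_cost_def sdist_def
        by (intro mult_left_mono sum_mono) (auto simp: ev intro!: op_lower[OF sp sp orthP[OF P]])
    qed
  qed
  show ?thesis using F O by blast
qed

end
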